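(* Let $\mathcal G$ be the graph defined below, and suppose $(<,\{S,Q\})$ is a mixed $1$-stack $1$-queue layout of $\mathcal G$ in which $v_1<s<t<v_2$ for some edge $(v_1,v_2)\in Q$ and some pair of twins $s,t$. Then: (a) there are three connectors $x_1,x_2,x_3\in C_{s,t}$ that either all satisfy $x_j>v_2$ or all satisfy $x_j<v_1$; (b) for any such three connectors $x_1,x_2,x_3$, there is some $i\in\{1,2,3\}$ such that one of the edges $(s,x_i),(t,x_i)$ lies in $S$ and the other lies in $Q$.
   Context: Graph $\mathcal G$: take two vertices $A,B$ and $19$ copies of a gadget $H$, identified at $A$ and $B$. Each copy of $H$ consists of two further vertices $s,t$ (called twins) joined by the twin edge $(s,t)$, the edges $(A,s),(A,t),(B,s),(B,t)$, and seven further vertices $x_1,\dots,x_7$ (called connectors), each of degree $2$ and adjacent to exactly $s$ and $t$; the set of these seven connectors is denoted $C_{s,t}$. ($A$ and $B$ are not adjacent; $\mathcal G$ has $173$ vertices and $361$ edges.) For a vertex ordering $<$ and an edge $e$, let $L(e)<R(e)$ be its endpoints; edges $e,f$ cross if $L(e)<L(f)<R(e)<R(f)$ and nest if $L(e)<L(f)<R(f)<R(e)$. A stack is an edge set with no two crossing edges, a queue an edge set with no two nested edges. A mixed $1$-stack $1$-queue layout is a vertex ordering $<$ together with a partition of the edge set into a stack $S$ and a queue $Q$. *)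

theory Defs
  imports Main
begin

text \<open>Vertices of the graph G: A, B, and for each copy i < 19 of the gadget H
  the twins Tw1 i, Tw2 i and the connectors Con i j (j < 7).\<close>
datatype gv = VA | VB | Tw1 nat | Tw2 nat | Con nat nat

definition G_V :: "gv set" where
  "G_V = {VA, VB} \<union> {Tw1 i | i. i < 19} \<union> {Tw2 i | i. i < 19}
         \<union> {Con i j | i j. i < 19 \<and> j < 7}"

definition G_E :: "gv set set" where
  "G_E = {{Tw1 i, Tw2 i} | i. i < 19}
       \<union> {{a, Tw1 i} | a i. a \<in> {VA, VB} \<and> i < 19}
       \<union> {{a, Tw2 i} | a i. a \<in> {VA, VB} \<and> i < 19}
       \<union> {{Tw1 i, Con i j} | i j. i < 19 \<and> j < 7}
       \<union> {{Tw2 i, Con i j} | i j. i < 19 \<and> j < 7}"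

definition connectors :: "nat \<Rightarrow> gv set" where
  "connectors i = {Con i j | j. j < 7}"

text \<open>A vertex ordering is given by an injective position map pos on G_V
  (u < v iff pos u < pos v).\<close>
definition crosses :: "(gv \<Rightarrow> nat) \<Rightarrow> gv set \<Rightarrow> gv set \<Rightarrow> bool" where
  "crosses pos e f \<longleftrightarrow> (\<exists>a b c d. e = {a, b} \<and> f = {c, d} \<and>
      pos a < pos c \<and> pos c < pos b \<and> pos b < pos d)"

definition nests :: "(gv \<Rightarrow> nat) \<Rightarrow> gv set \<Rightarrow> gv set \<Rightarrow> bool" where
  "nests pos e f \<longleftrightarrow> (\<exists>a b c d. e = {a, b} \<and> f = {c, d} \<and>
      pos a < pos c \<and> pos c < pos d \<and> pos d < pos b)"

definition is_stack :: "(gv \<Rightarrow> nat) \<Rightarrow> gv set set \<Rightarrow> bool" where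
  "is_stack pos S \<longleftrightarrow> (\<forall>e\<in>S. \<forall>f\<in>S. \<not> crosses pos e f)"

definition is_queue :: "(gv \<Rightarrow> nat) \<Rightarrow> gv set set \<Rightarrow> bool" where
  "is_queue pos Q \<longleftrightarrow> (\<forall>e\<in>Q. \<forall>f\<in>Q. \<not> nests pos e f)"

definition mixed_1s1q_layout :: "(gv \<Rightarrow> nat) \<Rightarrow> gv set set \<Rightarrow> gv set set \<Rightarrow> bool" where
  "mixed_1s1q_layout pos S Q \<longleftrightarrow> inj_on pos G_V \<and> S \<union> Q = G_E \<and> S \<inter> Q = {}
      \<and> is_stack pos S \<and> is_queue pos Q"

end

theory Submission
  imports Defs
begin

lemma stackD: "is_stack pos S \<Longrightarrow> {a,b}\<in>S \<Longrightarrow> {c,d}\<in>S \<Longrightarrow> pos a<pos c \<Longrightarrow> pos c<pos b \<Longrightarrow> pos b<pos d \<Longrightarrow> False"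
  unfolding is_stack_def crosses_def by blast

lemma queueD: "is_queue pos Q \<Longrightarrow> {a,b}\<in>Q \<Longrightarrow> {c,d}\<in>Q \<Longrightarrow> pos a<pos c \<Longrightarrow> pos c<pos d \<Longrightarrow> pos d<pos b \<Longrightarrow> False"
  unfolding is_queue_def nests_def by blast

lemma con_edge: "{Con i j, w} \<in> G_E \<Longrightarrow> w = Tw1 i \<or> w = Tw2 i"
  unfolding G_E_def by (auto simp: doubleton_eq_iff)

lemma edge_V: "e \<in> G_E \<Longrightarrow> x \<in> e \<Longrightarrow> x \<in> G_V"
  unfolding G_E_def G_V_def by auto

lemma three_of: assumes "3 \<le> card A"
  shows "\<exists>a b c. a\<in>A \<and> b\<in>A \<and> c\<in>A \<and> a\<noteq>b \<and> a\<noteq>c \<and> b\<noteq>c"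
proof -
  obtain T where "T \<subseteq> A" "card T = 3" using obtain_subset_with_card_n[OF assms] by blast
  then show ?thesis by (auto simp: card_3_iff)
qed

lemma between_pair:
  assumes st: "is_stack pos S" and "{s,x}\<in>S" "{t,x}\<in>S" "{s,y}\<in>S" "{t,y}\<in>S"
    and "pos s<pos t" "pos x\<noteq>pos y" "pos x\<noteq>pos s" "pos x\<noteq>pos t" "pos y\<noteq>pos s" "pos y\<noteq>pos t"
  shows "(pos x < pos s \<longrightarrow> pos s < pos y \<and> pos y < pos t)
       \<and> (pos s<pos x \<and> pos x<pos t \<longrightarrow> \<not>(pos s<pos y \<and> pos y<pos t))
       \<and> (pos t < pos x \<longrightarrow> pos s<pos y \<and> pos y<pos t)"
proof -
  have e: "{x,s}\<in>S" "{x,t}\<in>S" "{y,s}\<in>S" "{y,t}\<in>S" using assms by (auto simp: insert_commute)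
  note D = stackD[OF st]
  have 1: "\<not>(pos x<pos s \<and> pos y<pos s)"
  proof
    assume h: "pos x<pos s \<and> pos y<pos s"
    show False
    proof (cases "pos x < pos y")
      case True then show ?thesis using D[OF e(1) e(4)] h assms by linarith
    next
      case False then show ?thesis using D[OF e(3) e(2)] h assms by linarith
    qed
  qed
  have 2: "\<not>(pos t<pos x \<and> pos t<pos y)"
  proof
    assume h: "pos t<pos x \<and> pos t<pos y"
    show False
    proof (cases "pos x < pos y")
      case True then show ?thesis using D[OF assms(2) assms(5)] h assms by linarith
    next
      case False then show ?thesis using D[OF assms(4) assms(3)] h assms by linarith
    qed
  qed
  have 3: "\<not>(pos s<pos x \<and> pos x<pos t \<and> pos s<pos y \<and> pos y<pos t)"
  proof
    assume h: "pos s<pos x \<and> pos x<pos t \<and> pos s<pos y \<and> pos y<pos t"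
    show False
    proof (cases "pos x < pos y")
      case True then show ?thesis using D[OF assms(4) e(2)] h assms by linarith
    next
      case False then show ?thesis using D[OF assms(2) e(4)] h assms by linarith
    qed
  qed
  have 4: "\<not>(pos x<pos s \<and> pos t<pos y)" using D[OF e(2) assms(4)] assms by auto
  have 5: "\<not>(pos y<pos s \<and> pos t<pos x)" using D[OF e(4) assms(2)] assms by auto
  show ?thesis using 1 2 3 4 5 assms by linarith
qed

lemma outside_pair:
  assumes st: "is_stack pos S" and qu: "is_queue pos Q"
    and ex: "{s,x}\<in>S \<and> {t,x}\<in>S \<or> {s,x}\<in>Q \<and> {t,x}\<in>Q"
    and ey: "{s,y}\<in>S \<and> {t,y}\<in>S \<or> {s,y}\<in>Q \<and> {t,y}\<in>Q"
    and same: "({s,x}\<in>S) = ({s,y}\<in>S)"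
    and SQ: "S \<inter> Q = {}"
    and o: "pos s<pos t" "pos x < pos y"
    and side: "(pos t < pos x) \<or> (pos y < pos s)"
  shows False
proof -
  have e: "{x,s}\<in>S \<longleftrightarrow> {s,x}\<in>S" "{x,t}\<in>S \<longleftrightarrow> {t,x}\<in>S" "{y,s}\<in>S \<longleftrightarrow> {s,y}\<in>S" "{y,t}\<in>S \<longleftrightarrow> {t,y}\<in>S"
     "{x,s}\<in>Q \<longleftrightarrow> {s,x}\<in>Q" "{x,t}\<in>Q \<longleftrightarrow> {t,x}\<in>Q" "{y,s}\<in>Q \<longleftrightarrow> {s,y}\<in>Q" "{y,t}\<in>Q \<longleftrightarrow> {t,y}\<in>Q"
    by (auto simp: insert_commute)
  show False
  proof (cases "{s,x}\<in>S")
    case True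
    then have "{s,x}\<in>S" "{t,x}\<in>S" "{s,y}\<in>S" "{t,y}\<in>S" using ex ey same SQ by blast+
    note facts = this
    from side show ?thesis
    proof
      assume "pos t < pos x" then show False using stackD[OF st \<open>{s,x}\<in>S\<close> \<open>{t,y}\<in>S\<close>] o by linarith
    next
      assume "pos y < pos s" then show False
        using stackD[OF st _ _, of x s y t] e \<open>{s,x}\<in>S\<close> \<open>{t,y}\<in>S\<close> o by auto
    qed
  next
    case False
    then have "{s,x}\<in>Q" "{t,x}\<in>Q" "{s,y}\<in>Q" "{t,y}\<in>Q" using ex ey same SQ by blast+
    note facts = this
    from side show ?thesis
    proof
      assume "pos t < pos x" then show False using queueD[OF qu \<open>{s,y}\<in>Q\<close> \<open>{t,x}\<in>Q\<close>] o by linarith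
    next
      assume "pos y < pos s" then show False
        using queueD[OF qu _ _, of x t y s] e \<open>{t,x}\<in>Q\<close> \<open>{s,y}\<in>Q\<close> o by auto
    qed
  qed
qed

theorem lemma1:
  fixes pos :: "gv \<Rightarrow> nat" and S Q :: "gv set set" and v1 v2 s t :: gv and i :: nat
  assumes "mixed_1s1q_layout pos S Q"
    and "{v1, v2} \<in> Q"
    and "i < 19" and "{s, t} = {Tw1 i, Tw2 i}"
    and "pos v1 < pos s" and "pos s < pos t" and "pos t < pos v2"
  shows "(\<exists>x1 x2 x3. x1 \<in> connectors i \<and> x2 \<in> connectors i \<and> x3 \<in> connectors i
            \<and> x1 \<noteq> x2 \<and> x1 \<noteq> x3 \<and> x2 \<noteq> x3
            \<and> ((pos v2 < pos x1 \<and> pos v2 < pos x2 \<and> pos v2 < pos x3)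
               \<or> (pos x1 < pos v1 \<and> pos x2 < pos v1 \<and> pos x3 < pos v1)))
       \<and> (\<forall>x1 x2 x3. x1 \<in> connectors i \<and> x2 \<in> connectors i \<and> x3 \<in> connectors i
            \<and> x1 \<noteq> x2 \<and> x1 \<noteq> x3 \<and> x2 \<noteq> x3
            \<and> ((pos v2 < pos x1 \<and> pos v2 < pos x2 \<and> pos v2 < pos x3)
               \<or> (pos x1 < pos v1 \<and> pos x2 < pos v1 \<and> pos x3 < pos v1))
            \<longrightarrow> (\<exists>x\<in>{x1, x2, x3}. ({s, x} \<in> S \<and> {t, x} \<in> Q) \<or> ({s, x} \<in> Q \<and> {t, x} \<in> S)))"
proof -
  have inj: "inj_on pos G_V" and SQU: "S \<union> Q = G_E" and SQ: "S \<inter> Q = {}"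
    and st: "is_stack pos S" and qu: "is_queue pos Q"
    using assms(1) unfolding mixed_1s1q_layout_def by auto
  have v12: "v1 \<in> G_V" "v2 \<in> G_V" using assms(2) SQU edge_V by blast+
  have stV: "s \<in> G_V" "t \<in> G_V" using assms(3,4) unfolding G_V_def by (auto simp: doubleton_eq_iff)
  have conn: "x \<in> G_V \<and> {s,x} \<in> S \<union> Q \<and> {t,x} \<in> S \<union> Q \<and> pos x \<noteq> pos s \<and> pos x \<noteq> pos t
     \<and> pos x \<noteq> pos v1 \<and> pos x \<noteq> pos v2" if xc: "x \<in> connectors i" for x
  proof -
    obtain j where j: "x = Con i j" "j < 7" using xc unfolding connectors_def by blast
    have xV: "x \<in> G_V" using j assms(3) unfolding G_V_def by auto
    have E: "{s,x} \<in> G_E" "{t,x} \<in> G_E" using j assms(3,4) unfolding G_E_def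
      by (auto simp: doubleton_eq_iff)
    have "x \<noteq> s" "x \<noteq> t" using j assms(4) by (auto simp: doubleton_eq_iff)
    then have 1: "pos x \<noteq> pos s" "pos x \<noteq> pos t" using inj xV stV by (auto dest: inj_onD)
    have "x \<noteq> v1"
    proof
      assume "x = v1"
      then have "{Con i j, v2} \<in> G_E" using j assms(2) SQU by auto
      then have "v2 = s \<or> v2 = t" using con_edge assms(4) by (auto simp: doubleton_eq_iff)
      then show False using assms(5-7) by auto
    qed
    moreover have "x \<noteq> v2"
    proof
      assume "x = v2"
      then have "{Con i j, v1} \<in> G_E" using j assms(2) SQU by (auto simp: insert_commute)
      then have "v1 = s \<or> v1 = t" using con_edge assms(4) by (auto simp: doubleton_eq_iff)
      then show False using assms(5-7) by auto
    qed
    ultimately have "pos x \<noteq> pos v1" "pos x \<noteq> pos v2" using inj xV v12 by (auto dest: inj_onD)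
    then show ?thesis using 1 xV E SQU by auto
  qed
  have partb: "\<exists>x\<in>{x1, x2, x3}. ({s, x} \<in> S \<and> {t, x} \<in> Q) \<or> ({s, x} \<in> Q \<and> {t, x} \<in> S)"
    if h: "x1 \<in> connectors i \<and> x2 \<in> connectors i \<and> x3 \<in> connectors i
            \<and> x1 \<noteq> x2 \<and> x1 \<noteq> x3 \<and> x2 \<noteq> x3
            \<and> ((pos v2 < pos x1 \<and> pos v2 < pos x2 \<and> pos v2 < pos x3)
               \<or> (pos x1 < pos v1 \<and> pos x2 < pos v1 \<and> pos x3 < pos v1))" for x1 x2 x3
  proof (rule ccontr)
    assume nm: "\<not> ?thesis"
    have hs: "(pos v2 < pos x1 \<and> pos v2 < pos x2 \<and> pos v2 < pos x3)
               \<or> (pos x1 < pos v1 \<and> pos x2 < pos v1 \<and> pos x3 < pos v1)" using h by blast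
    have hc: "x1 \<in> connectors i" "x2 \<in> connectors i" "x3 \<in> connectors i" using h by blast+
    have nm': "({s,x}\<in>S \<and> {t,x}\<in>S \<or> {s,x}\<in>Q \<and> {t,x}\<in>Q)" if "x \<in> {x1,x2,x3}" for x
    proof -
      have "x \<in> connectors i" using that hc by blast
      then have "{s,x} \<in> S \<union> Q" "{t,x} \<in> S \<union> Q" using conn by blast+
      moreover have "\<not> (({s, x} \<in> S \<and> {t, x} \<in> Q) \<or> ({s, x} \<in> Q \<and> {t, x} \<in> S))" using nm that by blast
      ultimately show ?thesis by blast
    qed
    have side: "pos t < pos x \<or> pos x < pos s" if "x \<in> {x1,x2,x3}" for x
      using that hs assms(5-7) by (elim insertE emptyE disjE conjE; hypsubst; linarith)
    have dpos: "pos x \<noteq> pos y" if "x \<in> {x1,x2,x3}" "y \<in> {x1,x2,x3}" "x \<noteq> y" for x y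
    proof -
      have "x \<in> connectors i" "y \<in> connectors i" using that(1,2) hc by blast+
      then have "x \<in> G_V" "y \<in> G_V" using conn by blast+
      then show ?thesis using inj_onD[OF inj] that(3) by blast
    qed
    have key: "({s,x}\<in>S) \<noteq> ({s,y}\<in>S)" if "x \<in> {x1,x2,x3}" "y \<in> {x1,x2,x3}" "x \<noteq> y" for x y
    proof
      assume same: "({s,x}\<in>S) = ({s,y}\<in>S)"
      have sd: "(pos t < pos x \<and> pos t < pos y) \<or> (pos x < pos s \<and> pos y < pos s)"
        using that hs assms(5-7) by (elim insertE emptyE disjE conjE; hypsubst; linarith)
      show False
      proof (cases "pos x < pos y")
        case True then show ?thesis using outside_pair[OF st qu nm'[OF that(1)] nm'[OF that(2)] same SQ] sd assms(6) by auto
      next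
        case False then have "pos y < pos x" using dpos[OF that] by linarith
        then show ?thesis using outside_pair[OF st qu nm'[OF that(2)] nm'[OF that(1)] same[symmetric] SQ] sd assms(6) by auto
      qed
    qed
    have "({s,x1}\<in>S) \<noteq> ({s,x2}\<in>S)" "({s,x1}\<in>S) \<noteq> ({s,x3}\<in>S)" "({s,x2}\<in>S) \<noteq> ({s,x3}\<in>S)"
      using key[of x1 x2] key[of x1 x3] key[of x2 x3] h by simp_all
    then show False by blast
  qed
  define L where "L = {j. j < (7::nat) \<and> pos (Con i j) < pos v1}"
  define R where "R = {j. j < (7::nat) \<and> pos v2 < pos (Con i j)}"
  define M where "M = {j. j < (7::nat) \<and> pos v1 < pos (Con i j) \<and> pos (Con i j) < pos v2}"
  have cj: "Con i j \<in> connectors i" if "j < 7" for j using that unfolding connectors_def by auto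
  have cover: "{..<7} \<subseteq> L \<union> R \<union> M"
  proof
    fix j assume "j \<in> {..<(7::nat)}"
    then have "j < 7" by auto
    then show "j \<in> L \<union> R \<union> M" using conn[OF cj[of j]] unfolding L_def R_def M_def by auto
  qed
  have fin: "finite L" "finite R" "finite M" unfolding L_def R_def M_def by auto
  have "7 \<le> card (L \<union> R \<union> M)" using card_mono[OF _ cover] fin by auto
  also have "\<dots> \<le> card L + card R + card M" using fin by (metis card_Un_le add_le_mono1 order_trans)
  finally have c7: "7 \<le> card L + card R + card M" .
  have inS: "{s, Con i j} \<in> S \<and> {t, Con i j} \<in> S" if "j \<in> M" for j
  proof -
    have j: "j < 7" "pos v1 < pos (Con i j)" "pos (Con i j) < pos v2" using that unfolding M_def by auto
    note c = conn[OF cj[OF j(1)]]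
    have "{s, Con i j} \<notin> Q"
    proof
      assume q: "{s, Con i j} \<in> Q"
      show False
      proof (cases "pos (Con i j) < pos s")
        case True
        have qq: "{Con i j, s} \<in> Q" using q by (simp add: insert_commute)
        then show ?thesis using queueD[OF qu assms(2) qq] True j assms(5-7) by linarith
      next
        case False then show ?thesis using queueD[OF qu assms(2) q] c j assms(5) by auto
      qed
    qed
    moreover have "{t, Con i j} \<notin> Q"
    proof
      assume q: "{t, Con i j} \<in> Q"
      show False
      proof (cases "pos (Con i j) < pos t")
        case True
        have qq: "{Con i j, t} \<in> Q" using q by (simp add: insert_commute)
        then show ?thesis using queueD[OF qu assms(2) qq] True j assms(5-7) by linarith
      next
        case False then show ?thesis using queueD[OF qu assms(2) q] c j assms(5,6) by auto
      qed
    qed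
    ultimately show ?thesis using c by auto
  qed
  have "card M \<le> 2"
  proof (rule ccontr)
    assume "\<not> card M \<le> 2"
    then obtain a b c where abc: "a\<in>M" "b\<in>M" "c\<in>M" "a\<noteq>b" "a\<noteq>c" "b\<noteq>c"
      using three_of[of M] by auto
    have lt: "a < 7" "b < 7" "c < 7" using abc unfolding M_def by auto
    have dp: "pos (Con i x) \<noteq> pos (Con i y)" if "x < 7" "y < 7" "x \<noteq> y" for x y
      using that conn[OF cj[OF that(1)]] conn[OF cj[OF that(2)]] inj by (auto dest: inj_onD)
    have P: "(pos (Con i x) < pos s \<longrightarrow> pos s < pos (Con i y) \<and> pos (Con i y) < pos t)
       \<and> (pos s<pos (Con i x) \<and> pos (Con i x)<pos t \<longrightarrow> \<not>(pos s<pos (Con i y) \<and> pos (Con i y)<pos t))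
       \<and> (pos t < pos (Con i x) \<longrightarrow> pos s<pos (Con i y) \<and> pos (Con i y)<pos t)"
      if "x \<in> M" "y \<in> M" "x \<noteq> y" for x y
    proof -
      have "x < 7" "y < 7" using that unfolding M_def by auto
      then show ?thesis
        using between_pair[OF st _ _ _ _ assms(6), of "Con i x" "Con i y"] inS[OF that(1)] inS[OF that(2)]
          dp[of x y] that conn[OF cj[of x]] conn[OF cj[of y]] by blast
    qed
    have n: "pos (Con i x) \<noteq> pos s \<and> pos (Con i x) \<noteq> pos t" if "x \<in> M" for x
      using that conn[OF cj[of x]] unfolding M_def by auto
    show False using P[OF abc(1,2,4)] P[OF abc(1,3,5)] P[OF abc(2,3,6)] assms(6)
      n[OF abc(1)] n[OF abc(2)] n[OF abc(3)] by linarith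
  qed
  then have "3 \<le> card L \<or> 3 \<le> card R" using c7 by linarith
  then have parta: "\<exists>x1 x2 x3. x1 \<in> connectors i \<and> x2 \<in> connectors i \<and> x3 \<in> connectors i
            \<and> x1 \<noteq> x2 \<and> x1 \<noteq> x3 \<and> x2 \<noteq> x3
            \<and> ((pos v2 < pos x1 \<and> pos v2 < pos x2 \<and> pos v2 < pos x3)
               \<or> (pos x1 < pos v1 \<and> pos x2 < pos v1 \<and> pos x3 < pos v1))"
  proof
    assume "3 \<le> card L"
    then obtain a b c where abc: "a\<in>L" "b\<in>L" "c\<in>L" "a\<noteq>b" "a\<noteq>c" "b\<noteq>c"
      using three_of[of L] by auto
    then have "Con i a \<in> connectors i \<and> Con i b \<in> connectors i \<and> Con i c \<in> connectors i
            \<and> Con i a \<noteq> Con i b \<and> Con i a \<noteq> Con i c \<and> Con i b \<noteq> Con i c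
            \<and> (pos (Con i a) < pos v1 \<and> pos (Con i b) < pos v1 \<and> pos (Con i c) < pos v1)"
      using cj unfolding L_def by auto
    then show ?thesis by blast
  next
    assume "3 \<le> card R"
    then obtain a b c where abc: "a\<in>R" "b\<in>R" "c\<in>R" "a\<noteq>b" "a\<noteq>c" "b\<noteq>c"
      using three_of[of R] by auto
    then have "Con i a \<in> connectors i \<and> Con i b \<in> connectors i \<and> Con i c \<in> connectors i
            \<and> Con i a \<noteq> Con i b \<and> Con i a \<noteq> Con i c \<and> Con i b \<noteq> Con i c
            \<and> (pos v2 < pos (Con i a) \<and> pos v2 < pos (Con i b) \<and> pos v2 < pos (Con i c))"
      using cj unfolding R_def by auto
    then show ?thesis by blast
  qed
  show ?thesis using parta partb by blast
qed
end
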